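(* Let $M$ be a matroid of rank $r$ on a finite linearly ordered set $E$ and let $0\le k\le r-1$. Every $V\in\mathcal V_k$ is a circuit of $M$.
   Context: Graded lexicographic order on $2^E$: $X\prec Y$ if $|X|<|Y|$, or $|X|=|Y|$ and $\min(X\triangle Y)\in X$; $\min\mathcal X$ is the $\prec$-smallest member. $X$ is $k$-closed in $M$ if $\mathrm{cl}_M(Y)\subseteq X$ for all $Y\subseteq X$ with $|Y|\le k$; $\mathrm{cl}_k(X)$ is the intersection of all $k$-closed supersets of $X$ (so $\mathrm{cl}_{-1}(X)=X$). For a flat $F$ of rank $k$, $U^*_F=\min\{U:\mathrm{cl}_{k-1}(U)=F\}$, and $\mathcal U^*_k=\{U^*_F: F\text{ a flat of rank }k,\ |U^*_F|>k\}$. A subset $V\subseteq U$ is consecutive in $U$ if there are no $e,g\in V$ and $f\in U\setminus V$ with $e<f<g$. For $U\in\mathcal U^*_k$, $\mathcal V(U)$ is the set of $(k+1)$-subsets of $U$ that are consecutive in $U$, and $\mathcal V_k=\bigcup_{U\in\mathcal U^*_k}\mathcal V(U)$. *)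

theory Defs
  imports Main
begin

definition matroid :: "'a set \<Rightarrow> ('a set \<Rightarrow> bool) \<Rightarrow> bool" where
  "matroid E indep \<longleftrightarrow>
     finite E \<and>
     indep {} \<and>
     (\<forall>X. indep X \<longrightarrow> X \<subseteq> E) \<and>
     (\<forall>X Y. indep Y \<and> X \<subseteq> Y \<longrightarrow> indep X) \<and>
     (\<forall>X Y. indep X \<and> indep Y \<and> card X < card Y \<longrightarrow> (\<exists>e\<in>Y - X. indep (insert e X)))"

definition mrank :: "('a set \<Rightarrow> bool) \<Rightarrow> 'a set \<Rightarrow> nat" where
  "mrank indep X = Max (card ` {I. I \<subseteq> X \<and> indep I})"

definition mcl :: "'a set \<Rightarrow> ('a set \<Rightarrow> bool) \<Rightarrow> 'a set \<Rightarrow> 'a set" where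
  "mcl E indep X = {e \<in> E. mrank indep (insert e X) = mrank indep X}"

definition circuit :: "'a set \<Rightarrow> ('a set \<Rightarrow> bool) \<Rightarrow> 'a set \<Rightarrow> bool" where
  "circuit E indep C \<longleftrightarrow> C \<subseteq> E \<and> \<not> indep C \<and> (\<forall>x\<in>C. indep (C - {x}))"

definition flat :: "'a set \<Rightarrow> ('a set \<Rightarrow> bool) \<Rightarrow> 'a set \<Rightarrow> bool" where
  "flat E indep F \<longleftrightarrow> F \<subseteq> E \<and> mcl E indep F = F"

section \<open>k-closed sets and the k-closure (k may be -1)\<close>

definition kclosed :: "'a set \<Rightarrow> ('a set \<Rightarrow> bool) \<Rightarrow> int \<Rightarrow> 'a set \<Rightarrow> bool" where
  "kclosed E indep k X \<longleftrightarrow>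
     (\<forall>Y. Y \<subseteq> X \<and> int (card Y) \<le> k \<longrightarrow> mcl E indep Y \<subseteq> X)"

definition kcl :: "'a set \<Rightarrow> ('a set \<Rightarrow> bool) \<Rightarrow> int \<Rightarrow> 'a set \<Rightarrow> 'a set" where
  "kcl E indep k X = \<Inter> {Z. Z \<subseteq> E \<and> X \<subseteq> Z \<and> kclosed E indep k Z}"

definition glex_less :: "'a::linorder set \<Rightarrow> 'a set \<Rightarrow> bool" where
  "glex_less X Y \<longleftrightarrow>
     card X < card Y \<or> (card X = card Y \<and> X \<noteq> Y \<and> Min ((X - Y) \<union> (Y - X)) \<in> X)"

definition glex_min :: "'a::linorder set set \<Rightarrow> 'a set" where
  "glex_min \<X> = (THE U. U \<in> \<X> \<and> (\<forall>W\<in>\<X>. W \<noteq> U \<longrightarrow> glex_less U W))"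

definition Ustar :: "'a::linorder set \<Rightarrow> ('a set \<Rightarrow> bool) \<Rightarrow> nat \<Rightarrow> 'a set \<Rightarrow> 'a set" where
  "Ustar E indep k F = glex_min {U. U \<subseteq> E \<and> kcl E indep (int k - 1) U = F}"

definition Ustar_family :: "'a::linorder set \<Rightarrow> ('a set \<Rightarrow> bool) \<Rightarrow> nat \<Rightarrow> 'a set set" where
  "Ustar_family E indep k =
     {Ustar E indep k F | F. flat E indep F \<and> mrank indep F = k \<and> card (Ustar E indep k F) > k}"

definition consecutive :: "'a::linorder set \<Rightarrow> 'a set \<Rightarrow> bool" where
  "consecutive V U \<longleftrightarrow> V \<subseteq> U \<and>
     \<not> (\<exists>e\<in>V. \<exists>g\<in>V. \<exists>f\<in>U - V. e < f \<and> f < g)"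

definition Vsets :: "nat \<Rightarrow> 'a::linorder set \<Rightarrow> 'a set set" where
  "Vsets k U = {V. V \<subseteq> U \<and> card V = k + 1 \<and> consecutive V U}"

definition Vfamily :: "'a::linorder set \<Rightarrow> ('a set \<Rightarrow> bool) \<Rightarrow> nat \<Rightarrow> 'a set set" where
  "Vfamily E indep k = (\<Union>U\<in>Ustar_family E indep k. Vsets k U)"

end

theory Submission
  imports Defs
begin

lemma glex_card: "glex_less X Y \<Longrightarrow> card X \<le> card Y"
  unfolding glex_less_def by auto

lemma glex_irrefl: "\<not> glex_less X X" unfolding glex_less_def by auto

lemma glex_asym:
  assumes "finite X" "finite Y" "glex_less X Y" shows "\<not> glex_less Y X"
proof
  assume yx: "glex_less Y X"
  let ?D = "(X - Y) \<union> (Y - X)"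
  have c: "card X = card Y" "X \<noteq> Y" using assms(3) yx unfolding glex_less_def by auto
  have "?D \<noteq> {}" using c by auto
  hence "Min ?D \<in> ?D" using assms by (intro Min_in) auto
  moreover have "Min ?D \<in> X" "Min ?D \<in> Y" using assms(3) yx c unfolding glex_less_def by (auto simp: Un_commute)
  ultimately show False by auto
qed

lemma glex_total:
  fixes X Y :: "'a::linorder set"
  assumes "finite X" "finite Y" "X \<noteq> Y"
  shows "glex_less X Y \<or> glex_less Y X"
proof -
  let ?D = "(X - Y) \<union> (Y - X)"
  have "?D \<noteq> {}" using assms by auto
  hence "Min ?D \<in> ?D" using assms by (intro Min_in) auto
  thus ?thesis unfolding glex_less_def using assms by (auto simp: Un_commute)
qed

lemma glex_trans:
  fixes X Y Z :: "'a::linorder set"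
  assumes f: "finite X" "finite Y" "finite Z"
    and xy: "glex_less X Y" and yz: "glex_less Y Z"
  shows "glex_less X Z"
proof (cases "card X = card Y \<and> card Y = card Z")
  case False
  have "card X \<le> card Y" "card Y \<le> card Z" using glex_card[OF xy] glex_card[OF yz] by auto
  hence "card X < card Z" using False by (cases "card X = card Y") auto
  then show ?thesis by (simp add: glex_less_def)
next
  case True
  define A where "A = (X - Y) \<union> (Y - X)"
  define B where "B = (Y - Z) \<union> (Z - Y)"
  define D where "D = (X - Z) \<union> (Z - X)"
  have fA: "finite A" "finite B" "finite D" using f by (auto simp: A_def B_def D_def)
  have ne: "A \<noteq> {}" "B \<noteq> {}" using xy yz True unfolding glex_less_def A_def B_def by auto
  define a where "a = Min A"
  define b where "b = Min B"
  have aA: "a \<in> A" "a \<in> X" using Min_in[OF fA(1) ne(1)] xy True unfolding a_def glex_less_def A_def by auto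
  have bB: "b \<in> B" "b \<in> Y" using Min_in[OF fA(2) ne(2)] yz True unfolding b_def glex_less_def B_def by auto
  have amin: "\<And>d. d \<in> A \<Longrightarrow> a \<le> d" using fA(1) unfolding a_def by auto
  have bmin: "\<And>d. d \<in> B \<Longrightarrow> b \<le> d" using fA(2) unfolding b_def by auto
  define c where "c = min a b"
  have below: "\<And>d. d < c \<Longrightarrow> d \<notin> D"
  proof -
    fix d assume "d < c"
    hence "d \<notin> A" "d \<notin> B" using amin bmin unfolding c_def by (meson min_less_iff_conj not_le)+
    thus "d \<notin> D" unfolding A_def B_def D_def by blast
  qed
  have cD: "c \<in> D \<and> c \<in> X"
  proof (cases a b rule: linorder_cases)
    case less
    hence "a \<notin> B" using bmin by (meson not_le)
    thus ?thesis using aA less unfolding c_def A_def B_def D_def by auto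
  next
    case equal
    thus ?thesis using aA bB unfolding A_def by auto
  next
    case greater
    hence "b \<notin> A" using amin by (meson not_le)
    thus ?thesis using bB greater unfolding c_def A_def B_def D_def by auto
  qed
  have "Min D = c"
  proof (rule Min_eqI[OF fA(3)])
    show "c \<in> D" using cD by simp
    fix d assume "d \<in> D" thus "c \<le> d" using below by (meson not_le)
  qed
  then show ?thesis using cD True unfolding glex_less_def D_def by auto
qed

lemma glex_min_ex:
  assumes "finite \<X>" "\<X> \<noteq> {}" "\<forall>X\<in>\<X>. finite (X::'a::linorder set)"
  shows "\<exists>U. U \<in> \<X> \<and> (\<forall>W\<in>\<X>. W \<noteq> U \<longrightarrow> glex_less U W)"
  using assms
proof (induction \<X> rule: finite_ne_induct)
  case (singleton x)
  then show ?case by auto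
next
  case (insert x F)
  then obtain m where m: "m \<in> F" "\<forall>W\<in>F. W \<noteq> m \<longrightarrow> glex_less m W" by auto
  show ?case
  proof (cases "glex_less x m")
    case True
    show ?thesis
    proof (rule exI[of _ x], intro conjI ballI impI)
      fix W assume "W \<in> insert x F" "W \<noteq> x"
      hence "W \<in> F" by auto
      have fx: "finite x" "finite m" "finite W" using insert.prems m(1) \<open>W \<in> F\<close> by auto
      show "glex_less x W"
      proof (cases "W = m")
        case True
        then show ?thesis using \<open>glex_less x m\<close> by simp
      next
        case False
        then show ?thesis using glex_trans[OF fx \<open>glex_less x m\<close>] m(2) \<open>W \<in> F\<close> by blast
      qed
    qed simp
  next
    case False
    have "x \<noteq> m" using insert m by auto
    moreover have "finite x" "finite m" using insert.prems m(1) by auto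
    ultimately have xm: "glex_less m x" using glex_total[of x m] False by blast
    show ?thesis using m xm by (intro exI[of _ m]) auto
  qed
qed

lemma glex_min_prop:
  assumes "finite \<X>" "\<X> \<noteq> {}" "\<forall>X\<in>\<X>. finite (X::'a::linorder set)"
  shows "glex_min \<X> \<in> \<X> \<and> (\<forall>W\<in>\<X>. W \<noteq> glex_min \<X> \<longrightarrow> glex_less (glex_min \<X>) W)"
proof -
  obtain U where U: "U \<in> \<X> \<and> (\<forall>W\<in>\<X>. W \<noteq> U \<longrightarrow> glex_less U W)"
    using glex_min_ex[OF assms] by blast
  have uq: "V = U" if V: "V \<in> \<X> \<and> (\<forall>W\<in>\<X>. W \<noteq> V \<longrightarrow> glex_less V W)" for V
  proof (rule ccontr)
    assume ne: "V \<noteq> U"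
    have "glex_less V U" using V U ne by auto
    moreover have "glex_less U V" using V U ne by auto
    moreover have "finite U" "finite V" using U V assms(3) by auto
    ultimately show False using glex_asym by blast
  qed
  have "glex_min \<X> = U" unfolding glex_min_def
    apply (rule the_equality)
     apply (rule U)
    apply (erule uq)
    done
  thus ?thesis using U by simp
qed

context
  fixes E :: "'a::linorder set" and indep :: "'a set \<Rightarrow> bool"
  assumes M: "matroid E indep"
begin

lemma finE: "finite E" using M unfolding matroid_def by auto
lemma indep_sub: "indep X \<Longrightarrow> X \<subseteq> E" using M unfolding matroid_def by auto
lemma indep_down: "indep Y \<Longrightarrow> X \<subseteq> Y \<Longrightarrow> indep X" using M unfolding matroid_def by blast
lemma indep_empty: "indep {}" using M unfolding matroid_def by auto

lemma fin_cards: "finite (card ` {I. I \<subseteq> X \<and> indep I})"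
proof -
  have "{I. I \<subseteq> X \<and> indep I} \<subseteq> Pow E" using indep_sub by auto
  thus ?thesis using finE by (meson finite_Pow_iff finite_imageI finite_subset)
qed

lemma rank_ge: "I \<subseteq> X \<Longrightarrow> indep I \<Longrightarrow> card I \<le> mrank indep X"
  unfolding mrank_def using fin_cards by (intro Max_ge) auto

lemma rank_obtain: "\<exists>I. I \<subseteq> X \<and> indep I \<and> card I = mrank indep X"
proof -
  have "card ` {I. I \<subseteq> X \<and> indep I} \<noteq> {}" using indep_empty by auto
  from Max_in[OF fin_cards this] show ?thesis unfolding mrank_def by auto
qed

lemma rank_mono: "X \<subseteq> Y \<Longrightarrow> mrank indep X \<le> mrank indep Y"
proof -
  assume "X \<subseteq> Y"
  obtain I where "I \<subseteq> X" "indep I" "card I = mrank indep X" using rank_obtain by blast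
  thus ?thesis using rank_ge[of I Y] \<open>X \<subseteq> Y\<close> by auto
qed

lemma dep_elem:
  assumes "\<not> indep W" and that: "W \<subseteq> E"
  shows "\<exists>e\<in>W. e \<in> mcl E indep (W - {e})"
proof -
  obtain I where I: "I \<subseteq> W" "indep I" "card I = mrank indep W" using rank_obtain by blast
  have "I \<noteq> W" using I assms by auto
  then obtain e where e: "e \<in> W" "e \<notin> I" using I by auto
  have "I \<subseteq> W - {e}" using I e by auto
  hence "mrank indep (W - {e}) \<ge> mrank indep W" using rank_ge[OF _ I(2)] I(3) by simp
  moreover have "mrank indep (W - {e}) \<le> mrank indep W" by (rule rank_mono) auto
  moreover have "insert e (W - {e}) = W" using e by auto
  ultimately show ?thesis using e that unfolding mcl_def by auto
qed


lemma augment: "indep X \<Longrightarrow> indep Y \<Longrightarrow> card X < card Y \<Longrightarrow> \<exists>e\<in>Y - X. indep (insert e X)"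
  using M unfolding matroid_def by blast

lemma fin_indep: "indep X \<Longrightarrow> finite X" using indep_sub finE finite_subset by blast

lemma extend:
  "indep I \<Longrightarrow> indep K \<Longrightarrow> card I \<le> card K \<Longrightarrow> \<exists>J. indep J \<and> I \<subseteq> J \<and> J \<subseteq> I \<union> K \<and> card J = card K"
proof (induction "card K - card I" arbitrary: I)
  case 0
  then show ?case by (intro exI[of _ I]) auto
next
  case (Suc n)
  have lt: "card I < card K" using Suc.hyps(2) by simp
  obtain e where e: "e \<in> K - I" "indep (insert e I)" using augment[OF Suc.prems(1) Suc.prems(2) lt] by blast
  have ci: "card (insert e I) = Suc (card I)" using e fin_indep[OF Suc.prems(1)] by auto
  have "n = card K - card (insert e I)" using Suc.hyps(2) ci by simp
  moreover have "card (insert e I) \<le> card K" using ci lt by simp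
  ultimately have "\<exists>J. indep J \<and> insert e I \<subseteq> J \<and> J \<subseteq> insert e I \<union> K \<and> card J = card K"
    using Suc.hyps(1)[of "insert e I"] e(2) Suc.prems(2) by blast
  then obtain J where "indep J" "insert e I \<subseteq> J" "J \<subseteq> insert e I \<union> K" "card J = card K" by blast
  then show ?case using e by (intro exI[of _ J]) auto
qed

lemma mcl_mono:
  assumes "Y \<subseteq> F" "e \<in> mcl E indep Y"
  shows "e \<in> mcl E indep F"
proof (rule ccontr)
  assume nf: "e \<notin> mcl E indep F"
  have eE: "e \<in> E" using assms unfolding mcl_def by auto
  have "mrank indep (insert e F) \<noteq> mrank indep F" using nf eE unfolding mcl_def by auto
  moreover have "mrank indep F \<le> mrank indep (insert e F)" by (rule rank_mono) auto
  ultimately have gt: "mrank indep F < mrank indep (insert e F)" by simp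
  obtain K where K: "K \<subseteq> insert e F" "indep K" "card K = mrank indep (insert e F)"
    using rank_obtain by blast
  obtain I where I: "I \<subseteq> Y" "indep I" "card I = mrank indep Y" using rank_obtain by blast
  have "card I \<le> card K" using I K rank_mono[of Y "insert e F"] assms(1) by auto
  then obtain J where J: "indep J" "I \<subseteq> J" "J \<subseteq> I \<union> K" "card J = card K"
    using extend I K by blast
  have "e \<in> J"
  proof (rule ccontr)
    assume "e \<notin> J"
    hence "J \<subseteq> F" using J K I assms(1) by blast
    hence "card J \<le> mrank indep F" using rank_ge J(1) by blast
    thus False using J K gt by auto
  qed
  have "e \<notin> I"
  proof
    assume "e \<in> I"
    hence "e \<in> Y" using I by auto
    hence "J \<subseteq> F" using J K I assms(1) by blast
    hence "card J \<le> mrank indep F" using rank_ge J(1) by blast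
    thus False using J K gt by auto
  qed
  have "indep (insert e I)" using indep_down[OF J(1)] J \<open>e \<in> J\<close> by auto
  moreover have "insert e I \<subseteq> insert e Y" using I by blast
  ultimately have "card (insert e I) \<le> mrank indep (insert e Y)" using rank_ge by blast
  hence "mrank indep (insert e Y) > mrank indep Y" using I \<open>e \<notin> I\<close> fin_indep[OF I(2)] by auto
  thus False using assms(2) unfolding mcl_def by auto
qed

lemma mcl_sub: "mcl E indep Y \<subseteq> E" unfolding mcl_def by auto

lemma E_kclosed: "kclosed E indep k E" unfolding kclosed_def using mcl_sub by auto

lemma kcl_sub: "X \<subseteq> E \<Longrightarrow> kcl E indep k X \<subseteq> E"
  unfolding kcl_def using E_kclosed by auto

lemma kcl_ext: "X \<subseteq> kcl E indep k X" unfolding kcl_def by auto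

lemma kcl_mono: "X \<subseteq> Y \<Longrightarrow> kcl E indep k X \<subseteq> kcl E indep k Y"
  unfolding kcl_def by auto

lemma kcl_closed: "kclosed E indep k (kcl E indep k X)"
  unfolding kclosed_def kcl_def by (auto simp: kclosed_def) (blast)

lemma kcl_least: "X \<subseteq> Z \<Longrightarrow> Z \<subseteq> E \<Longrightarrow> kclosed E indep k Z \<Longrightarrow> kcl E indep k X \<subseteq> Z"
  unfolding kcl_def by auto

lemma kcl_mcl: "Y \<subseteq> kcl E indep k X \<Longrightarrow> int (card Y) \<le> k \<Longrightarrow> mcl E indep Y \<subseteq> kcl E indep k X"
  using kcl_closed unfolding kclosed_def by blast

lemma flat_kcl: assumes "flat E indep F" shows "kcl E indep k F = F"
proof -
  have "kclosed E indep k F"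
    unfolding kclosed_def
  proof (intro allI impI)
    fix Y assume "Y \<subseteq> F \<and> int (card Y) \<le> k"
    hence "mcl E indep Y \<subseteq> mcl E indep F" using mcl_mono by blast
    thus "mcl E indep Y \<subseteq> F" using assms unfolding flat_def by auto
  qed
  thus ?thesis using kcl_least[of F F] kcl_ext[of F] assms unfolding flat_def by auto
qed


lemma main_ctx:
  fixes k :: nat
  assumes V: "V \<in> Vfamily E indep k"
  shows "circuit E indep V"
proof -
  obtain U where U: "U \<in> Ustar_family E indep k" and VU: "V \<in> Vsets k U"
    using V unfolding Vfamily_def by blast
  obtain F where F: "flat E indep F" "mrank indep F = k" "U = Ustar E indep k F"
    using U unfolding Ustar_family_def by blast
  define X where "X = {U. U \<subseteq> E \<and> kcl E indep (int k - 1) U = F}"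
  have FE: "F \<subseteq> E" using F(1) unfolding flat_def by auto
  have finX: "finite X" using finE unfolding X_def by (rule rev_finite_subset[OF finite_Pow_iff[THEN iffD2]]) auto
  have FX: "F \<in> X" unfolding X_def using FE flat_kcl[OF F(1)] by blast
  hence neX: "X \<noteq> {}" by auto
  have allfin: "\<forall>Z\<in>X. finite Z" unfolding X_def using finE finite_subset by blast
  have Ueq: "U = glex_min X" using F(3) unfolding Ustar_def X_def by simp
  from glex_min_prop[OF finX neX allfin]
  have UX: "U \<in> X" and Umin: "\<forall>W\<in>X. W \<noteq> U \<longrightarrow> glex_less U W" unfolding Ueq[symmetric] by auto
  have UE: "U \<subseteq> E" and kU: "kcl E indep (int k - 1) U = F" using UX unfolding X_def by auto
  have finU: "finite U" using UE finE finite_subset by blast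
  have small: "indep W" if W: "W \<subseteq> U" "card W \<le> k" for W
  proof (rule ccontr)
    assume nW: "\<not> indep W"
    have WE: "W \<subseteq> E" using W UE by blast
    obtain e where e: "e \<in> W" "e \<in> mcl E indep (W - {e})" using dep_elem[OF nW WE] by blast
    have finW: "finite W" using W(1) finU finite_subset by blast
    have cW: "card (W - {e}) = card W - 1" using e(1) finW by simp
    have "card W > 0" using e(1) finW by (auto simp: card_gt_0_iff)
    hence cW1: "card W \<ge> 1" by simp
    have ci: "int (card (W - {e})) \<le> int k - 1" using cW cW1 W(2) by simp
    have sub1: "W - {e} \<subseteq> kcl E indep (int k - 1) (U - {e})"
      using kcl_ext[of "U - {e}"] W(1) by blast
    have "e \<in> kcl E indep (int k - 1) (U - {e})"
      by (rule subsetD[OF kcl_mcl[OF sub1 ci] e(2)])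
    hence Usub: "U \<subseteq> kcl E indep (int k - 1) (U - {e})" using kcl_ext[of "U - {e}"] by blast
    have "kcl E indep (int k - 1) U \<subseteq> kcl E indep (int k - 1) (U - {e})"
      by (rule kcl_least[OF Usub kcl_sub kcl_closed]) (use UE in blast)
    moreover have "kcl E indep (int k - 1) (U - {e}) \<subseteq> kcl E indep (int k - 1) U"
      by (rule kcl_mono) blast
    ultimately have "kcl E indep (int k - 1) (U - {e}) = F" using kU by blast
    hence inX: "U - {e} \<in> X" unfolding X_def using UE by blast
    have neU: "U - {e} \<noteq> U" using e(1) W(1) by blast
    have "glex_less U (U - {e})" using Umin inX neU by simp
    hence "card U \<le> card (U - {e})" by (rule glex_card)
    moreover have "card (U - {e}) < card U" using finU e(1) W(1) by (meson card_Diff1_less subsetD)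
    ultimately show False by simp
  qed
  have VsU: "V \<subseteq> U" and cV: "card V = k + 1" using VU unfolding Vsets_def by auto
  have UF: "U \<subseteq> F" using kcl_ext[of U] kU by blast
  have finV: "finite V" using VsU finU finite_subset by blast
  have dep: "\<not> indep V"
  proof
    assume "indep V"
    hence "card V \<le> mrank indep F" using rank_ge VsU UF by blast
    thus False using cV F(2) by simp
  qed
  have ind: "\<forall>x\<in>V. indep (V - {x})"
  proof
    fix x assume "x \<in> V"
    hence "card (V - {x}) = k" using cV finV by simp
    thus "indep (V - {x})" using small[of "V - {x}"] VsU by blast
  qed
  show ?thesis unfolding circuit_def using VsU UE dep ind by blast
qed

end

theorem lemma5p6:
  fixes E :: "'a::linorder set" and indep :: "'a set \<Rightarrow> bool" and r k :: nat
  assumes "matroid E indep"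
    and "mrank indep E = r"
    and "k + 1 \<le> r"
    and "V \<in> Vfamily E indep k"
  shows "circuit E indep V"
  using main_ctx[OF assms(1) assms(4)] .

end
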